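(* Let $\mathcal{X}\subseteq\mathbb{R}^d$ be nonempty closed convex with $\mathbf{0}\in\mathcal{X}$ and diameter at most $D$, let $f_1,\dots,f_T:\mathcal{X}\to\mathbb{R}$ be convex differentiable with $\max_{\mathbf{x}\in\mathcal{X}}\|\nabla f_t(\mathbf{x})\|_2\le G$, and let $\Phi_t:\mathcal{X}\to\mathcal{X}$ satisfy $\|\Phi_t(\mathbf{x})-\Phi_t(\mathbf{x}')\|_2\le\|\mathbf{x}-\mathbf{x}'\|_2$ for all $t\in[T]$, $\mathbf{x},\mathbf{x}'\in\mathcal{X}$. Consider $\mathbf{x}_1\in\mathcal{X}$ and, for $t\ge1$, $\bar{\mathbf{x}}_{t+1}=\Pi_{\mathcal{X}}[\mathbf{x}_t-\eta\nabla f_t(\mathbf{x}_t)]$, $\mathbf{x}_{t+1}=\Phi_t(\bar{\mathbf{x}}_{t+1})$, with $\eta>0$. Then for any $\mathbf{u}_1,\dots,\mathbf{u}_{T+1}\in\mathcal{X}$, \[ \sum_{t=1}^T f_t(\mathbf{x}_t)-\sum_{t=1}^T f_t(\mathbf{u}_t)\le\frac{D^2}{2\eta}+\frac D\eta\sum_{t=1}^T\|\mathbf{u}_{t+1}-\Phi_t(\mathbf{u}_t)\|_2+\frac{\eta TG^2}{2}. \]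
   Context: $\Pi_{\mathcal{X}}$ is Euclidean projection onto $\mathcal{X}$; $f_t$ is revealed after $\mathbf{x}_t$ is played, and the maps $\Phi_t$ are given to the learner. *)

theory Defs
  imports "HOL-Analysis.Analysis"
begin

end

theory Submission imports Defs "HOL-Analysis.Analysis" begin
lemma grad_ineq:
  fixes X :: "'a::euclidean_space set" and F :: "'a \<Rightarrow> real"
  assumes cx: "convex X" and cf: "convex_on X F"
    and d: "(F has_derivative (\<lambda>h. c \<bullet> h)) (at y within X)"
    and y: "y \<in> X" and v: "v \<in> X"
  shows "F y - F v \<le> c \<bullet> (y - v)"
proof -
  define p where "p = (\<lambda>s::real. y + s *\<^sub>R (v - y))"
  have pX: "p s \<in> X" if "s \<in> {0..1}" for s
  proof -
    have "p s = (1 - s) *\<^sub>R y + s *\<^sub>R v" by (simp add: p_def algebra_simps)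
    thus ?thesis using convexD_alt[OF cx y v, of s] that by auto
  qed
  have p0: "p 0 = y" by (simp add: p_def)
  have dp: "(p has_derivative (\<lambda>s. s *\<^sub>R (v - y))) (at 0 within {0..1})"
    unfolding p_def by (auto intro!: derivative_eq_intros)
  have d': "(F has_derivative (\<lambda>h. c \<bullet> h)) (at (p 0) within p ` {0..1})"
  proof -
    have "p ` {0..1} \<subseteq> X" using pX by auto
    thus ?thesis using has_derivative_subset[OF d] p0 by auto
  qed
  have "((F \<circ> p) has_derivative (\<lambda>s. c \<bullet> (s *\<^sub>R (v - y)))) (at 0 within {0..1})"
    using diff_chain_within[OF dp d'] by (simp add: o_def)
  hence "((F \<circ> p) has_field_derivative (c \<bullet> (v - y))) (at 0 within {0..1})"
    by (simp add: has_field_derivative_def mult.commute[of _ "c \<bullet> (v - y)"])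
  hence lim: "((\<lambda>s. ((F \<circ> p) s - (F \<circ> p) 0) / (s - 0)) \<longlongrightarrow> c \<bullet> (v - y)) (at 0 within {0..1})"
    by (simp add: has_field_derivative_iff)
  have lim2: "((\<lambda>s. ((F \<circ> p) s - (F \<circ> p) 0) / (s - 0)) \<longlongrightarrow> c \<bullet> (v - y)) (at 0 within {0<..<1})"
    by (rule tendsto_mono[OF _ lim]) (auto intro: at_le)
  have nb: "at (0::real) within {0<..<1} \<noteq> bot"
    by (subst at_within_eq_bot_iff) auto
  have ev: "eventually (\<lambda>s. ((F \<circ> p) s - (F \<circ> p) 0) / (s - 0) \<le> F v - F y) (at 0 within {0<..<1})"
    unfolding eventually_at_filter
  proof (intro always_eventually allI impI)
    fix s :: real assume s: "s \<in> {0<..<1}"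
    have "p s = (1 - s) *\<^sub>R y + s *\<^sub>R v" by (simp add: p_def algebra_simps)
    hence "F (p s) \<le> (1 - s) * F y + s * F v"
      using convex_onD[OF cf, of s y v] s y v by auto
    hence "F (p s) - F y \<le> s * (F v - F y)" by (simp add: algebra_simps)
    thus "((F \<circ> p) s - (F \<circ> p) 0) / (s - 0) \<le> F v - F y"
      using s p0 by (simp add: divide_simps mult.commute)
  qed
  have "c \<bullet> (v - y) \<le> F v - F y"
    using tendsto_upperbound[OF lim2 ev nb] .
  thus ?thesis by (simp add: inner_diff_right)
qed

lemma step_ineq:
  fixes X :: "'a::euclidean_space set" and F :: "'a \<Rightarrow> real"
  assumes cx: "convex X" and cl: "closed X" and ne: "X \<noteq> {}"
    and diam: "\<forall>y\<in>X. \<forall>z\<in>X. norm (y - z) \<le> D"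
    and cf: "convex_on X F"
    and d: "(F has_derivative (\<lambda>h. c \<bullet> h)) (at y within X)"
    and cG: "norm c \<le> G"
    and Pm: "\<forall>y\<in>X. P y \<in> X"
    and Pn: "\<forall>y\<in>X. \<forall>z\<in>X. norm (P y - P z) \<le> norm (y - z)"
    and eta: "\<eta> > 0"
    and y: "y \<in> X" and v: "v \<in> X" and v': "v' \<in> X"
    and y': "y' = P (closest_point X (y - \<eta> *\<^sub>R c))"
  shows "F y - F v \<le> ((norm (y - v))\<^sup>2 - (norm (y' - v'))\<^sup>2) / (2 * \<eta>)
           + (D / \<eta>) * norm (v' - P v) + \<eta> * G\<^sup>2 / 2"
proof -
  define z where "z = y - \<eta> *\<^sub>R c"
  define w where "w = closest_point X z"
  have w: "w \<in> X" unfolding w_def using closest_point_in_set[OF cl ne] .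
  have dot: "(z - w) \<bullet> (v - w) \<le> 0" unfolding w_def using closest_point_dot[OF cx cl v] .
  have e1: "(norm (z - v))\<^sup>2 = (norm (z - w))\<^sup>2 + (norm (w - v))\<^sup>2 - 2 * ((z - w) \<bullet> (v - w))"
    unfolding power2_norm_eq_inner by (simp add: algebra_simps inner_commute)
  have b1: "(norm (w - v))\<^sup>2 \<le> (norm (z - v))\<^sup>2" using e1 dot zero_le_power2[of "norm (z - w)"] by linarith
  have e2: "(norm (z - v))\<^sup>2 = (norm (y - v))\<^sup>2 - 2 * \<eta> * (c \<bullet> (y - v)) + \<eta>\<^sup>2 * (norm c)\<^sup>2"
    unfolding z_def power2_norm_eq_inner by (simp add: algebra_simps inner_commute power2_eq_square)
  have G0: "0 \<le> G" using cG norm_ge_zero order_trans by blast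
  have cG2: "(norm c)\<^sup>2 \<le> G\<^sup>2" using cG by (simp add: power_mono)
  have key: "2 * \<eta> * (c \<bullet> (y - v)) \<le> (norm (y - v))\<^sup>2 - (norm (w - v))\<^sup>2 + \<eta>\<^sup>2 * G\<^sup>2"
    using b1 e2 mult_left_mono[OF cG2, of "\<eta>\<^sup>2"] by simp
  define a where "a = norm (y' - v')"
  define b where "b = norm (w - v)"
  define e where "e = norm (v' - P v)"
  have y'w: "y' = P w" using y' unfolding w_def z_def by simp
  have aX: "y' \<in> X" using Pm w y'w by auto
  have "a \<le> norm (P w - P v) + norm (P v - v')" unfolding a_def y'w
    using norm_triangle_ineq[of "P w - P v" "P v - v'"] by simp
  also have "\<dots> \<le> b + e" unfolding b_def e_def using Pn w v by (simp add: norm_minus_commute)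
  finally have ab: "a \<le> b + e" .
  have aD: "a \<le> D" unfolding a_def using diam aX v' by auto
  have bD: "b \<le> D" unfolding b_def using diam w v by auto
  have a0: "0 \<le> a" and b0: "0 \<le> b" and e0: "0 \<le> e" unfolding a_def b_def e_def by auto
  have sq: "a\<^sup>2 - b\<^sup>2 \<le> 2 * D * e"
  proof (cases "a \<le> b")
    case True
    hence "a\<^sup>2 \<le> b\<^sup>2" using a0 by (simp add: power_mono)
    moreover have "0 \<le> 2 * D * e" using a0 aD e0 by simp
    ultimately show ?thesis by simp
  next
    case False
    have "a\<^sup>2 - b\<^sup>2 = (a - b) * (a + b)" by (simp add: power2_eq_square algebra_simps)
    also have "\<dots> \<le> e * (2 * D)" using False ab aD bD a0 b0
      by (intro mult_mono) auto
    finally show ?thesis by (simp add: mult_ac)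
  qed
  have gi: "F y - F v \<le> c \<bullet> (y - v)" using grad_ineq[OF cx cf d y v] .
  have "2 * \<eta> * (F y - F v) \<le> (norm (y - v))\<^sup>2 - a\<^sup>2 + 2 * D * e + \<eta>\<^sup>2 * G\<^sup>2"
  proof -
    have "2 * \<eta> * (F y - F v) \<le> 2 * \<eta> * (c \<bullet> (y - v))"
      using mult_left_mono[OF gi, of "2*\<eta>"] eta by simp
    thus ?thesis using key sq unfolding b_def by linarith
  qed
  hence "F y - F v \<le> ((norm (y - v))\<^sup>2 - a\<^sup>2 + 2 * D * e + \<eta>\<^sup>2 * G\<^sup>2) / (2 * \<eta>)"
    using eta by (simp add: field_simps)
  also have "\<dots> = ((norm (y - v))\<^sup>2 - a\<^sup>2) / (2 * \<eta>) + (D / \<eta>) * e + \<eta> * G\<^sup>2 / 2"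
    using eta by (simp add: field_simps power2_eq_square)
  finally show ?thesis unfolding a_def e_def .
qed

theorem theorem6:
  fixes X :: "'a::euclidean_space set"
    and D G \<eta> :: real and T :: nat
    and f :: "nat \<Rightarrow> 'a \<Rightarrow> real"
    and g :: "nat \<Rightarrow> 'a \<Rightarrow> 'a"
    and \<Phi> :: "nat \<Rightarrow> 'a \<Rightarrow> 'a"
    and x u :: "nat \<Rightarrow> 'a"
  assumes X_ne: "X \<noteq> {}" and X_closed: "closed X" and X_convex: "convex X"
    and X_0: "0 \<in> X"
    and X_diam: "\<forall>y\<in>X. \<forall>z\<in>X. norm (y - z) \<le> D"
    and f_convex: "\<forall>t\<in>{1..T}. convex_on X (f t)"
    and f_grad: "\<forall>t\<in>{1..T}. \<forall>y\<in>X. (f t has_derivative (\<lambda>h. g t y \<bullet> h)) (at y within X)"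
    and G_bound: "\<forall>t\<in>{1..T}. \<forall>y\<in>X. norm (g t y) \<le> G"
    and \<Phi>_maps: "\<forall>t\<in>{1..T}. \<forall>y\<in>X. \<Phi> t y \<in> X"
    and \<Phi>_nonexp: "\<forall>t\<in>{1..T}. \<forall>y\<in>X. \<forall>z\<in>X. norm (\<Phi> t y - \<Phi> t z) \<le> norm (y - z)"
    and \<eta>_pos: "\<eta> > 0"
    and x1: "x 1 \<in> X"
    and x_step: "\<forall>t\<in>{1..T}. x (t + 1) = \<Phi> t (closest_point X (x t - \<eta> *\<^sub>R g t (x t)))"
    and u_in: "\<forall>t\<in>{1..T+1}. u t \<in> X"
  shows "(\<Sum>t=1..T. f t (x t)) - (\<Sum>t=1..T. f t (u t))
         \<le> D\<^sup>2 / (2 * \<eta>) + (D / \<eta>) * (\<Sum>t=1..T. norm (u (t + 1) - \<Phi> t (u t)))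
           + \<eta> * real T * G\<^sup>2 / 2"
proof -
  have xX': "x (Suc n) \<in> X" if "n \<le> T" for n
    using that
  proof (induction n)
    case 0 then show ?case using x1 by simp
  next
    case (Suc n)
    have t: "Suc n \<in> {1..T}" using Suc.prems by simp
    have "closest_point X (x (Suc n) - \<eta> *\<^sub>R g (Suc n) (x (Suc n))) \<in> X"
      using closest_point_in_set[OF X_closed X_ne] .
    then show ?case using x_step t \<Phi>_maps by (metis Suc_eq_plus1)
  qed
  have xX: "x t \<in> X" if "t \<in> {1..T+1}" for t
    using xX'[of "t - 1"] that by (cases t) auto
  define \<phi> where "\<phi> t = (norm (x t - u t))\<^sup>2" for t
  define e where "e t = norm (u (t + 1) - \<Phi> t (u t))" for t
  have st: "f t (x t) - f t (u t) \<le> (\<phi> t - \<phi> (t+1)) / (2 * \<eta>) + (D / \<eta>) * e t + \<eta> * G\<^sup>2 / 2"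
    if t: "t \<in> {1..T}" for t
    unfolding \<phi>_def e_def
  proof (rule step_ineq[where F="f t" and c="g t (x t)" and P="\<Phi> t" and G=G])
    have tx: "x t \<in> X" using t xX by auto
    show "(f t has_derivative (\<bullet>) (g t (x t))) (at (x t) within X)"
      using f_grad t tx by auto
    show "norm (g t (x t)) \<le> G" using G_bound t tx by auto
  qed (use t X_convex X_closed X_ne X_diam f_convex \<eta>_pos u_in xX \<Phi>_maps \<Phi>_nonexp x_step in auto)
  have "(\<Sum>t=1..T. f t (x t)) - (\<Sum>t=1..T. f t (u t)) = (\<Sum>t=1..T. f t (x t) - f t (u t))"
    by (simp add: sum_subtractf)
  also have "\<dots> \<le> (\<Sum>t=1..T. (\<phi> t - \<phi> (t+1)) / (2 * \<eta>) + (D / \<eta>) * e t + \<eta> * G\<^sup>2 / 2)"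
    by (rule sum_mono) (rule st)
  also have "\<dots> = (\<Sum>t=1..T. \<phi> t - \<phi> (t+1)) / (2 * \<eta>) + (D / \<eta>) * (\<Sum>t=1..T. e t) + \<eta> * real T * G\<^sup>2 / 2"
    by (simp add: sum.distrib sum_divide_distrib sum_distrib_left)
  also have "(\<Sum>t=1..T. \<phi> t - \<phi> (t+1)) = \<phi> 1 - \<phi> (T+1)"
  proof -
    have "(\<Sum>t=1..T. \<phi> (Suc t) - \<phi> t) = \<phi> (Suc T) - \<phi> 1"
      by (rule sum_Suc_diff) simp
    moreover have "(\<Sum>t=1..T. \<phi> t - \<phi> (t+1)) = - (\<Sum>t=1..T. \<phi> (Suc t) - \<phi> t)"
      by (simp add: sum_negf[symmetric])
    ultimately show ?thesis by simp
  qed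
  also have "\<phi> 1 - \<phi> (T+1) \<le> D\<^sup>2"
  proof -
    have "norm (x 1 - u 1) \<le> D" using X_diam x1 u_in by auto
    hence "\<phi> 1 \<le> D\<^sup>2" unfolding \<phi>_def by (simp add: power_mono)
    moreover have "0 \<le> \<phi> (T+1)" unfolding \<phi>_def by simp
    ultimately show ?thesis by simp
  qed
  hence "(\<phi> 1 - \<phi> (T+1)) / (2 * \<eta>) \<le> D\<^sup>2 / (2 * \<eta>)"
    using \<eta>_pos by (simp add: divide_right_mono)
  finally show ?thesis unfolding e_def by simp
qed
end
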